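(* Let $\Delta$ be a quasi-tree on $[n]$ of dimension $d-1$, and let $2\leq\ell\leq d-1$. For $k\ge1$ let $I_k\subset K[x_1,\ldots,x_n]$ be the ideal generated by the monomials $x_F=\prod_{i\in F}x_i$ with $F\subseteq[n]$, $|F|=k+1$, $F\notin\Delta$ (the facet ideal of $\overline{\mathrm{skel}_\Delta(k)}$). Then $I_\ell$ is generated by all squarefree monomials $u$ of degree $\ell+1$ that are divisible by some monomial generator of $I_1$.
   Context: A simplicial complex on $[n]$ is a collection of subsets of $[n]$ containing all singletons and closed under taking subsets; facets are maximal faces. A facet $F$ is a leaf if either it is the only facet, or there is a facet $G\neq F$ with $H\cap F\subseteq G\cap F$ for every facet $H\neq F$. A complex is a quasi-tree if its facets can be labeled $F_1,\ldots,F_m$ so that each $F_i$ is a leaf of the complex generated by $F_1,\ldots,F_i$. $\mathrm{skel}_\Delta(k)$ is the complex whose facets are the $k$-dimensional faces of $\Delta$, and $\bar\Gamma$ for a pure $(e-1)$-dimensional $\Gamma$ is the complex generated by the $e$-subsets of $[n]$ not in $\Gamma$. *)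

theory Defs
  imports Main "HOL-Library.Poly_Mapping"
begin

definition simplicial_complex :: "nat \<Rightarrow> nat set set \<Rightarrow> bool" where
  "simplicial_complex n \<Delta> \<longleftrightarrow> \<Delta> \<subseteq> Pow {1..n} \<and> (\<forall>i\<in>{1..n}. {i} \<in> \<Delta>)
     \<and> (\<forall>F\<in>\<Delta>. \<forall>G. G \<subseteq> F \<longrightarrow> G \<in> \<Delta>)"

definition facets :: "'v set set \<Rightarrow> 'v set set" where
  "facets \<Delta> = {F \<in> \<Delta>. \<forall>G\<in>\<Delta>. F \<subseteq> G \<longrightarrow> G = F}"

definition generated_complex :: "'v set set \<Rightarrow> 'v set set" where
  "generated_complex Fs = {G. \<exists>F\<in>Fs. G \<subseteq> F}"

definition is_leaf :: "'v set set \<Rightarrow> 'v set \<Rightarrow> bool" where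
  "is_leaf \<Delta> F \<longleftrightarrow> F \<in> facets \<Delta> \<and>
     (facets \<Delta> = {F} \<or>
      (\<exists>G\<in>facets \<Delta>. G \<noteq> F \<and> (\<forall>H\<in>facets \<Delta>. H \<noteq> F \<longrightarrow> H \<inter> F \<subseteq> G \<inter> F)))"

definition quasi_tree :: "'v set set \<Rightarrow> bool" where
  "quasi_tree \<Delta> \<longleftrightarrow> (\<exists>fs. distinct fs \<and> set fs = facets \<Delta> \<and>
     (\<forall>i < length fs. is_leaf (generated_complex (set (take (Suc i) fs))) (fs ! i)))"

definition has_dim :: "'v set set \<Rightarrow> int \<Rightarrow> bool" where
  "has_dim \<Delta> e \<longleftrightarrow> (\<exists>F\<in>\<Delta>. int (card F) - 1 = e) \<and> (\<forall>F\<in>\<Delta>. finite F \<and> int (card F) - 1 \<le> e)"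

type_synonym 'k mpoly = "(nat \<Rightarrow>\<^sub>0 nat) \<Rightarrow>\<^sub>0 'k"

definition is_ideal :: "'a::comm_ring_1 set \<Rightarrow> bool" where
  "is_ideal I \<longleftrightarrow> 0 \<in> I \<and> (\<forall>x\<in>I. \<forall>y\<in>I. x + y \<in> I) \<and> (\<forall>r. \<forall>x\<in>I. r * x \<in> I)"

definition ideal_gen :: "'a::comm_ring_1 set \<Rightarrow> 'a set" where
  "ideal_gen S = \<Inter> {I. is_ideal I \<and> S \<subseteq> I}"

definition monom :: "(nat \<Rightarrow>\<^sub>0 nat) \<Rightarrow> 'k::comm_ring_1 mpoly" where
  "monom \<alpha> = Poly_Mapping.single \<alpha> 1"

definition xF :: "nat set \<Rightarrow> 'k::comm_ring_1 mpoly" where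
  "xF F = monom (\<Sum>i\<in>F. Poly_Mapping.single i 1)"

definition I_ideal :: "nat \<Rightarrow> nat set set \<Rightarrow> nat \<Rightarrow> 'k::field mpoly set" where
  "I_ideal n \<Delta> k = ideal_gen {xF F | F. F \<subseteq> {1..n} \<and> card F = k + 1 \<and> F \<notin> \<Delta>}"

end

theory Submission imports Defs begin

lemma facets_gen:
  assumes "\<forall>X\<in>A. \<forall>Y\<in>A. X \<subseteq> Y \<longrightarrow> X = Y"
  shows "facets (generated_complex A) = A"
proof
  show "facets (generated_complex A) \<subseteq> A"
  proof
    fix F assume "F \<in> facets (generated_complex A)"
    then have F: "F \<in> generated_complex A" "\<forall>G\<in>generated_complex A. F \<subseteq> G \<longrightarrow> G = F"
      unfolding facets_def by auto
    then obtain Y where Y: "Y \<in> A" "F \<subseteq> Y" unfolding generated_complex_def by auto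
    have "Y \<in> generated_complex A" using Y(1) unfolding generated_complex_def by auto
    then have "Y = F" using F(2) Y(2) by auto
    then show "F \<in> A" using Y(1) by simp
  qed
  show "A \<subseteq> facets (generated_complex A)"
  proof
    fix X assume X: "X \<in> A"
    have "X \<in> generated_complex A" using X unfolding generated_complex_def by auto
    moreover have "\<forall>G\<in>generated_complex A. X \<subseteq> G \<longrightarrow> G = X"
    proof (intro ballI impI)
      fix G assume "G \<in> generated_complex A" "X \<subseteq> G"
      then obtain Y where Y: "Y \<in> A" "G \<subseteq> Y" unfolding generated_complex_def by auto
      have "X \<subseteq> Y" using \<open>X \<subseteq> G\<close> Y(2) by (rule subset_trans)
      then have "X = Y" using assms X Y(1) by simp
      then show "G = X" using Y(2) \<open>X \<subseteq> G\<close> by simp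
    qed
    ultimately show "X \<in> facets (generated_complex A)" unfolding facets_def by simp
  qed
qed

lemma flag_prefix:
  assumes dist: "distinct fs"
    and anti: "\<forall>X\<in>set fs. \<forall>Y\<in>set fs. X \<subseteq> Y \<longrightarrow> X = Y"
    and leaf: "\<forall>i<length fs. is_leaf (generated_complex (set (take (Suc i) fs))) (fs!i)"
  shows "m \<le> length fs \<Longrightarrow> (\<forall>a\<in>S. \<forall>b\<in>S. a\<noteq>b \<longrightarrow> {a,b} \<in> generated_complex (set (take m fs)))
    \<Longrightarrow> a0\<in>S \<Longrightarrow> b0\<in>S \<Longrightarrow> a0\<noteq>b0 \<Longrightarrow> S \<in> generated_complex (set (take m fs))"
proof (induction m arbitrary: S)
  case 0
  then show ?case by (auto simp: generated_complex_def)
next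
  case (Suc m)
  define T where "T = set (take m fs)"
  define Fm where "Fm = fs ! m"
  have m: "m < length fs" using Suc.prems(1) by simp
  have tk: "set (take (Suc m) fs) = insert Fm T"
    unfolding T_def Fm_def using m by (simp add: take_Suc_conv_app_nth)
  have FmT: "Fm \<notin> T"
  proof
    assume "Fm \<in> T"
    then obtain j where j: "j < m" "fs!j = fs!m"
      unfolding T_def Fm_def in_set_conv_nth by auto
    then show False using dist m nth_eq_iff_index_eq by fastforce
  qed
  have Tsub: "insert Fm T \<subseteq> set fs" unfolding tk[symmetric] by (rule set_take_subset)
  have fac: "facets (generated_complex (insert Fm T)) = insert Fm T"
  proof (rule facets_gen, intro ballI impI)
    fix X Y assume "X \<in> insert Fm T" "Y \<in> insert Fm T" "X \<subseteq> Y"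
    then show "X = Y" using anti Tsub by (meson subsetD)
  qed
  have lf0: "is_leaf (generated_complex (set (take (Suc m) fs))) (fs!m)"
    using leaf[rule_format, OF m] .
  have lf: "is_leaf (generated_complex (insert Fm T)) Fm"
    using lf0 unfolding tk Fm_def .
  have pr: "\<forall>a\<in>S. \<forall>b\<in>S. a\<noteq>b \<longrightarrow> {a,b} \<in> generated_complex (insert Fm T)"
    using Suc.prems(2) unfolding tk .
  show ?case
  proof (cases "S \<subseteq> Fm")
    case True
    then show ?thesis unfolding tk generated_complex_def by simp
  next
    case False
    then obtain v where v: "v \<in> S" "v \<notin> Fm" by (auto simp: subset_iff)
    have pairs: "{a,b} \<in> generated_complex T" if ab: "a \<in> S" "b \<in> S" "a \<noteq> b" for a b
    proof (cases "{a,b} \<subseteq> Fm")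
      case False
      have "{a,b} \<in> generated_complex (insert Fm T)" using pr ab by blast
      then obtain Y where Y: "Y \<in> insert Fm T" "{a,b} \<subseteq> Y" unfolding generated_complex_def by auto
      then have "Y \<in> T" using False by auto
      then show ?thesis using Y(2) unfolding generated_complex_def by auto
    next
      case True
      have va: "v \<noteq> a" using v True by auto
      have "{v,a} \<in> generated_complex (insert Fm T)" using pr ab(1) v(1) va by simp
      then obtain H where H: "H \<in> T" "v \<in> H" "a \<in> H" using v unfolding generated_complex_def by auto
      have HF: "H \<noteq> Fm" using H FmT by auto
      have ns: "insert Fm T \<noteq> {Fm}" using H HF by auto
      from lf obtain G where G: "G \<in> insert Fm T" "G \<noteq> Fm"
        "\<forall>H\<in>insert Fm T. H \<noteq> Fm \<longrightarrow> H \<inter> Fm \<subseteq> G \<inter> Fm"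
        using lf ns unfolding is_leaf_def fac by auto
      have "H \<inter> Fm \<subseteq> G \<inter> Fm" using G(3) H(1) HF by auto
      then have aG: "a \<in> G" using H(3) True by auto
      have vb: "v \<noteq> b" using v True by auto
      have "{v,b} \<in> generated_complex (insert Fm T)" using pr ab(2) v(1) vb by simp
      then obtain H' where H': "H' \<in> T" "v \<in> H'" "b \<in> H'" using v unfolding generated_complex_def by auto
      have H'F: "H' \<noteq> Fm" using H' FmT by auto
      have "H' \<inter> Fm \<subseteq> G \<inter> Fm" using G(3) H'(1) H'F by auto
      then have bG: "b \<in> G" using H'(3) True by auto
      have GT: "G \<in> T" using G(1,2) by auto
      show ?thesis using aG bG GT unfolding generated_complex_def by auto
    qed
    have "S \<in> generated_complex T"
      using Suc.IH[of S] m pairs Suc.prems unfolding T_def by simp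
    then show ?thesis unfolding tk generated_complex_def by auto
  qed
qed


lemma lookup_beta: "finite F \<Longrightarrow> Poly_Mapping.lookup (\<Sum>i\<in>F. Poly_Mapping.single i (1::nat)) j = (if j\<in>F then 1 else 0)"
  by (simp add: Poly_Mapping.lookup_sum Poly_Mapping.lookup_single when_def)
lemma lookup_beta': "finite F \<Longrightarrow> Poly_Mapping.lookup (\<Sum>i\<in>F. Poly_Mapping.single i (Suc 0)) j = (if j\<in>F then 1 else 0)"
  by (simp add: Poly_Mapping.lookup_sum Poly_Mapping.lookup_single when_def)
lemma keys_beta: "finite F \<Longrightarrow> Poly_Mapping.keys (\<Sum>i\<in>F. Poly_Mapping.single i (1::nat)) = F"
  by (auto simp: in_keys_iff lookup_beta lookup_beta' split: if_splits)
lemma dvd_keys: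
  assumes "finite F" "(xF F :: 'k::field mpoly) dvd monom \<alpha>"
  shows "F \<subseteq> Poly_Mapping.keys \<alpha>"
proof -
  define \<beta> where "\<beta> = (\<Sum>i\<in>F. Poly_Mapping.single i (1::nat))"
  from assms(2) obtain p where p0: "(monom \<alpha> :: 'k mpoly) = xF F * p" by (rule dvdE)
  have p: "(monom \<alpha> :: 'k mpoly) = Poly_Mapping.single \<beta> 1 * p"
    using p0 unfolding xF_def monom_def \<beta>_def .
  have "\<alpha> \<in> Poly_Mapping.keys (monom \<alpha> :: 'k mpoly)" by (simp add: monom_def)
  also have "\<dots> \<subseteq> {a + b | a b. a \<in> Poly_Mapping.keys (Poly_Mapping.single \<beta> (1::'k)) \<and> b \<in> Poly_Mapping.keys p}"
    unfolding p by (rule keys_mult)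
  finally obtain a b where ab: "\<alpha> = a + b" "a \<in> Poly_Mapping.keys (Poly_Mapping.single \<beta> (1::'k))"
    by blast
  have "a = \<beta>" using ab(2) by simp
  then have lk: "Poly_Mapping.lookup \<alpha> i = Poly_Mapping.lookup \<beta> i + Poly_Mapping.lookup b i" for i
    using ab(1) by (simp add: lookup_add)
  show ?thesis
  proof
    fix i assume i: "i \<in> F"
    have "Poly_Mapping.lookup \<beta> i = 1" unfolding \<beta>_def using lookup_beta[OF assms(1)] i by simp
    then have "Poly_Mapping.lookup \<alpha> i \<noteq> 0" using lk[of i] by simp
    then show "i \<in> Poly_Mapping.keys \<alpha>" by (simp add: in_keys_iff)
  qed
qed
lemma xF_split:
  assumes "finite G" "F \<subseteq> G"
  shows "(xF G :: 'k::comm_ring_1 mpoly) = xF F * xF (G - F)"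
proof -
  have "(\<Sum>i\<in>G. Poly_Mapping.single i (1::nat)) = (\<Sum>i\<in>F. Poly_Mapping.single i 1) + (\<Sum>i\<in>G - F. Poly_Mapping.single i 1)"
    using sum.subset_diff[OF assms(2) assms(1)] by (simp add: add.commute)
  then show ?thesis unfolding xF_def monom_def by (simp add: mult_single)
qed
lemma sq_beta:
  assumes "\<forall>i. Poly_Mapping.lookup \<alpha> i \<le> (1::nat)"
  shows "\<alpha> = (\<Sum>i\<in>Poly_Mapping.keys \<alpha>. Poly_Mapping.single i 1)"
proof (rule poly_mapping_eqI)
  fix i
  show "Poly_Mapping.lookup \<alpha> i = Poly_Mapping.lookup (\<Sum>i\<in>Poly_Mapping.keys \<alpha>. Poly_Mapping.single i 1) i"
    using assms[rule_format, of i] by (auto simp: lookup_beta lookup_beta' in_keys_iff)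
qed
lemma sum_card:
  fixes n :: nat
  assumes "Poly_Mapping.keys \<alpha> \<subseteq> {1..n}" "\<forall>i. Poly_Mapping.lookup \<alpha> i \<le> (1::nat)"
  shows "(\<Sum>i\<in>{1..n}. Poly_Mapping.lookup \<alpha> i) = card (Poly_Mapping.keys \<alpha>)"
proof -
  have "(\<Sum>i\<in>{1..n}. Poly_Mapping.lookup \<alpha> i) = (\<Sum>i\<in>Poly_Mapping.keys \<alpha>. Poly_Mapping.lookup \<alpha> i)"
  proof (rule sum.mono_neutral_right)
    show "\<forall>i\<in>{1..n} - Poly_Mapping.keys \<alpha>. Poly_Mapping.lookup \<alpha> i = 0"
      by (auto simp: in_keys_iff)
    show "finite {1..n}" by simp
    show "Poly_Mapping.keys \<alpha> \<subseteq> {1..n}" by (rule assms(1))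
  qed
  also have "\<dots> = (\<Sum>i\<in>Poly_Mapping.keys \<alpha>. 1)"
  proof (rule sum.cong[OF refl])
    fix i assume "i \<in> Poly_Mapping.keys \<alpha>"
    then have "Poly_Mapping.lookup \<alpha> i \<noteq> 0" by (simp add: in_keys_iff)
    moreover have "Poly_Mapping.lookup \<alpha> i \<le> 1" using assms(2) by simp
    ultimately show "Poly_Mapping.lookup \<alpha> i = 1" by simp
  qed
  finally show ?thesis by simp
qed

lemma qt_flag:
  assumes sub: "\<Delta> \<subseteq> Pow {1..(n::nat)}" and cl: "\<forall>F\<in>\<Delta>. \<forall>G. G \<subseteq> F \<longrightarrow> G \<in> \<Delta>"
    and qt: "quasi_tree \<Delta>"
    and pr: "\<forall>a\<in>S. \<forall>b\<in>S. a\<noteq>b \<longrightarrow> {a,b} \<in> \<Delta>" and ab: "a0\<in>S" "b0\<in>S" "a0\<noteq>b0"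
  shows "S \<in> \<Delta>"
proof -
  obtain fs where fs: "distinct fs" "set fs = facets \<Delta>"
    "\<forall>i < length fs. is_leaf (generated_complex (set (take (Suc i) fs))) (fs ! i)"
    using qt unfolding quasi_tree_def by blast
  have finD: "finite \<Delta>" using sub by (rule finite_subset) simp
  have eq: "generated_complex (facets \<Delta>) = \<Delta>"
  proof
    show "generated_complex (facets \<Delta>) \<subseteq> \<Delta>"
      using cl unfolding generated_complex_def facets_def by blast
    show "\<Delta> \<subseteq> generated_complex (facets \<Delta>)"
    proof
      fix F assume F: "F \<in> \<Delta>"
      obtain m where m: "m \<in> \<Delta>" "F \<subseteq> m" "\<forall>b\<in>\<Delta>. m \<subseteq> b \<longrightarrow> m = b"
        using finite_has_maximal2[OF finD F] by blast
      then have "m \<in> facets \<Delta>" unfolding facets_def by blast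
      then show "F \<in> generated_complex (facets \<Delta>)" using m(2) unfolding generated_complex_def by blast
    qed
  qed
  have anti: "\<forall>X\<in>set fs. \<forall>Y\<in>set fs. X \<subseteq> Y \<longrightarrow> X = Y"
    using fs(2) unfolding facets_def by blast
  have tk: "take (length fs) fs = fs" by simp
  have "S \<in> generated_complex (set (take (length fs) fs))"
    by (rule flag_prefix[OF fs(1) anti fs(3) le_refl _ ab]) (use pr eq fs(2) tk in simp)
  then show ?thesis using eq fs(2) tk by simp
qed

theorem lemma4p3:
  fixes n d l :: nat and \<Delta> :: "nat set set"
  assumes "simplicial_complex n \<Delta>"
    and "quasi_tree \<Delta>"
    and "has_dim \<Delta> (int d - 1)"
    and "2 \<le> l" and "int l \<le> int d - 1"
  shows "(I_ideal n \<Delta> l :: 'k::field mpoly set) =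
    ideal_gen {monom \<alpha> | \<alpha>. Poly_Mapping.keys \<alpha> \<subseteq> {1..n} \<and> (\<forall>i. Poly_Mapping.lookup \<alpha> i \<le> 1)
                 \<and> (\<Sum>i\<in>{1..n}. Poly_Mapping.lookup \<alpha> i) = l + 1
                 \<and> (\<exists>F. F \<subseteq> {1..n} \<and> card F = 2 \<and> F \<notin> \<Delta> \<and> xF F dvd (monom \<alpha> :: 'k mpoly))}"
proof -
  have sub: "\<Delta> \<subseteq> Pow {1..n}" and cl: "\<forall>F\<in>\<Delta>. \<forall>G. G \<subseteq> F \<longrightarrow> G \<in> \<Delta>"
    using assms(1) unfolding simplicial_complex_def by auto
  let ?A = "{xF F :: 'k mpoly | F. F \<subseteq> {1..n} \<and> card F = l + 1 \<and> F \<notin> \<Delta>}"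
  let ?B = "{monom \<alpha> :: 'k mpoly | \<alpha>. Poly_Mapping.keys \<alpha> \<subseteq> {1..n} \<and> (\<forall>i. Poly_Mapping.lookup \<alpha> i \<le> 1)
                 \<and> (\<Sum>i\<in>{1..n}. Poly_Mapping.lookup \<alpha> i) = l + 1
                 \<and> (\<exists>F. F \<subseteq> {1..n} \<and> card F = 2 \<and> F \<notin> \<Delta> \<and> xF F dvd (monom \<alpha> :: 'k mpoly))}"
  have "?A = ?B"
  proof
    show "?A \<subseteq> ?B"
    proof
      fix x assume "x \<in> ?A"
      then obtain F where F: "x = xF F" "F \<subseteq> {1..n}" "card F = l + 1" "F \<notin> \<Delta>" by blast
      have finF: "finite F" using F(2) finite_subset by blast
      define \<alpha> where "\<alpha> = (\<Sum>i\<in>F. Poly_Mapping.single i (1::nat))"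
      have keys: "Poly_Mapping.keys \<alpha> = F" unfolding \<alpha>_def using keys_beta[OF finF] .
      have lk: "\<forall>i. Poly_Mapping.lookup \<alpha> i \<le> 1" unfolding \<alpha>_def using lookup_beta[OF finF] by simp
      have sm: "(\<Sum>i\<in>{1..n}. Poly_Mapping.lookup \<alpha> i) = l + 1"
        using sum_card[of \<alpha> n] keys lk F by simp
      have "\<exists>a b. a\<in>F \<and> b\<in>F \<and> a\<noteq>b" using F(3) assms(4) finF using card_le_Suc0_iff_eq by fastforce
      then obtain a0 b0 where ab: "a0\<in>F" "b0\<in>F" "a0\<noteq>b0" by blast
      have "\<not> (\<forall>a\<in>F. \<forall>b\<in>F. a\<noteq>b \<longrightarrow> {a,b} \<in> \<Delta>)"
        using qt_flag[OF sub cl assms(2) _ ab] F(4) by blast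
      then obtain a b where pab: "a\<in>F" "b\<in>F" "a\<noteq>b" "{a,b} \<notin> \<Delta>" by blast
      have sp: "(xF F :: 'k mpoly) = xF {a,b} * xF (F - {a,b})"
        using xF_split[OF finF, of "{a,b}"] pab by simp
      have xm: "x = monom \<alpha>" using F(1) unfolding xF_def \<alpha>_def by simp
      have dv: "xF {a,b} dvd (monom \<alpha> :: 'k mpoly)" using sp xm F(1) by (metis dvdI)
      have ab2: "{a,b} \<subseteq> {1..n}" "card {a,b} = 2" using pab F(2) by auto
      have ex: "\<exists>F. F \<subseteq> {1..n} \<and> card F = 2 \<and> F \<notin> \<Delta> \<and> xF F dvd (monom \<alpha> :: 'k mpoly)"
        by (intro exI[of _ "{a,b}"] conjI ab2 pab(4) dv)
      have kn: "Poly_Mapping.keys \<alpha> \<subseteq> {1..n}" using keys F(2) by simp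
      show "x \<in> ?B" unfolding mem_Collect_eq
        by (rule exI[of _ \<alpha>]) (intro conjI xm kn lk sm ex)
    qed
    show "?B \<subseteq> ?A"
    proof
      fix x assume "x \<in> ?B"
      then obtain \<alpha> F' where a: "x = monom \<alpha>" "Poly_Mapping.keys \<alpha> \<subseteq> {1..n}" "\<forall>i. Poly_Mapping.lookup \<alpha> i \<le> 1"
        "(\<Sum>i\<in>{1..n}. Poly_Mapping.lookup \<alpha> i) = l + 1"
        "F' \<subseteq> {1..n}" "card F' = 2" "F' \<notin> \<Delta>" "xF F' dvd (monom \<alpha> :: 'k mpoly)" by blast
      have finF': "finite F'" using a(6) card.infinite by fastforce
      have F'k: "F' \<subseteq> Poly_Mapping.keys \<alpha>" using dvd_keys[OF finF' a(8)] .
      have "Poly_Mapping.keys \<alpha> \<notin> \<Delta>" using cl F'k a(7) by blast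
      moreover have "card (Poly_Mapping.keys \<alpha>) = l + 1" using sum_card[OF a(2) a(3)] a(4) by simp
      moreover have "x = xF (Poly_Mapping.keys \<alpha>)"
      proof -
        have e: "(\<Sum>i\<in>Poly_Mapping.keys \<alpha>. Poly_Mapping.single i 1) = \<alpha>"
          using sq_beta[OF a(3)] by (rule sym)
        show ?thesis unfolding xF_def e by (rule a(1))
      qed
      ultimately show "x \<in> ?A" unfolding mem_Collect_eq
        by (intro exI[of _ "Poly_Mapping.keys \<alpha>"] conjI a(2))
    qed
  qed
  then show ?thesis unfolding I_ideal_def by (rule arg_cong[where f=ideal_gen])
qed

end
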